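(* For $T$ large enough let $Q_T$ denote the unique $T$-periodic solution of the pendulum equation $\ddot q=\sin q$ with small positive energy satisfying $Q_T(0)=-\pi$, $Q_T(T)=\pi$. There exists $T_0>0$ such that for every $T\ge T_0$ and every continuous $f:[-1,T+1]\to\mathbf R$ there exists a unique solution $h$ of $$-\ddot h+\cos(Q_T(t))\,h=f,\qquad h(0)=h(T)=0,$$ on $[-1,T+1]$, and the Green operator $\mathcal G:C^0([-1,T+1])\to C^2([-1,T+1])$, $\mathcal G(f)=h$, satisfies $$\max_{t\in[-1,T+1]}\big(|h(t)|+|\dot h(t)|\big)\le C\max_{t\in[-1,T+1]}|f(t)|$$ for a constant $C>0$ independent of $T$. *)

theory Defs
  imports "HOL-Analysis.Analysis"
begin

text \<open>Q (with derivative Q') is the rotating solution of the pendulum equation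
  q'' = sin q with Q(0) = -pi, Q(T) = pi, T-periodic modulo 2 pi, and with
  positive energy E = q'^2/2 + cos q - 1 > 0 (i.e. above the separatrix).\<close>
definition pendulum_QT :: "real \<Rightarrow> (real \<Rightarrow> real) \<Rightarrow> (real \<Rightarrow> real) \<Rightarrow> bool" where
  "pendulum_QT T Q Q' \<longleftrightarrow>
     (\<forall>t. (Q has_real_derivative Q' t) (at t) \<and> (Q' has_real_derivative sin (Q t)) (at t)) \<and>
     (\<forall>t. Q (t + T) = Q t + 2 * pi \<and> Q' (t + T) = Q' t) \<and>
     (Q' 0)\<^sup>2 / 2 + cos (Q 0) - 1 > 0 \<and>
     Q 0 = - pi \<and> Q T = pi"

definition green_sol ::
  "real \<Rightarrow> (real \<Rightarrow> real) \<Rightarrow> (real \<Rightarrow> real) \<Rightarrow> (real \<Rightarrow> real) \<Rightarrow> (real \<Rightarrow> real) \<Rightarrow> bool" where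
  "green_sol T Q f h h' \<longleftrightarrow>
     (\<exists>h''. \<forall>t\<in>{-1..T+1}.
        (h has_real_derivative h' t) (at t within {-1..T+1}) \<and>
        (h' has_real_derivative h'' t) (at t within {-1..T+1}) \<and>
        - h'' t + cos (Q t) * h t = f t) \<and>
     h 0 = 0 \<and> h T = 0"

end

theory Submission
  imports Defs
begin


lemma sq_le_helper:
  fixes x a :: real
  assumes "\<bar>x\<bar> \<le> a" shows "x\<^sup>2 \<le> a\<^sup>2"
proof -
  have "\<bar>x\<bar>\<^sup>2 \<le> a\<^sup>2" using assms by (intro power_mono) auto
  then show ?thesis by simp
qed

lemma sq_ge_helper:
  fixes x a :: real
  assumes "a \<le> \<bar>x\<bar>" "0 \<le> a" shows "a\<^sup>2 \<le> x\<^sup>2"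
proof -
  have "a\<^sup>2 \<le> \<bar>x\<bar>\<^sup>2" using assms by (intro power_mono) auto
  then show ?thesis by simp
qed

lemma trig_ineq:
  fixes x :: real
  assumes "-pi \<le> x" "x \<le> pi"
  shows "4 + cos x * (6 - x\<^sup>2) + 2 * x * sin x \<ge> 1/20"
proof -
  have xs: "x * sin x \<ge> 0"
  proof (cases "x \<ge> 0")
    case True then show ?thesis using sin_ge_zero[of x] assms by simp
  next
    case False
    then have "sin (-x) \<ge> 0" using sin_ge_zero[of "-x"] assms by simp
    then have "sin x \<le> 0" by simp
    then show ?thesis using False by (simp add: mult_nonpos_nonpos)
  qed
  have p1: "3.14 \<le> pi" "pi \<le> 3.15" using pi_approx by auto
  have x2: "x\<^sup>2 \<le> pi\<^sup>2" proof - have "\<bar>x\<bar> \<le> \<bar>pi\<bar>" using assms by auto then show ?thesis by (simp add: abs_le_square_iff[symmetric]) qed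
  have pp0: "pi*pi \<le> 3.15*3.15" by (rule mult_mono) (use p1 in auto)
  have pp1: "3.14*3.14 \<le> pi*pi" by (rule mult_mono) (use p1 in auto)
  have pp: "pi\<^sup>2 \<le> 9.93" "pi\<^sup>2 \<ge> 9.85" using pp0 pp1 by (auto simp: power2_eq_square)
  have c1: "\<bar>cos x\<bar> \<le> 1" by (rule abs_cos_le_one)
  show ?thesis
  proof (cases "\<bar>x\<bar> \<le> pi/2")
    case True
    then have "cos x \<ge> 0" by (intro cos_ge_zero) auto
    moreover have "x\<^sup>2 \<le> (pi/2)\<^sup>2" using True by (rule sq_le_helper)
    moreover have "(pi/2)\<^sup>2 \<le> 2.5" using pp by (simp add: power_divide)
    ultimately have "cos x * (6 - x\<^sup>2) \<ge> 0" by (intro mult_nonneg_nonneg) auto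
    then show ?thesis using xs by linarith
  next
    case False
    then have "(pi/2)\<^sup>2 \<le> x\<^sup>2" by (intro sq_ge_helper) auto
    moreover have "2.4 \<le> (pi/2)\<^sup>2" using pp by (simp add: power_divide)
    ultimately have a: "\<bar>6 - x\<^sup>2\<bar> \<le> 3.93" using x2 pp by (auto simp: abs_if)
    have "\<bar>cos x * (6 - x\<^sup>2)\<bar> \<le> 1 * 3.93"
      unfolding abs_mult by (rule mult_mono) (use c1 a in auto)
    then show ?thesis using xs by (simp add: abs_le_iff)
  qed
qed




lemma maxp:
  fixes u ud udd p pd pdd c :: "real \<Rightarrow> real" and T :: real
  assumes T: "0 < T"
  and ppos: "\<forall>t\<in>{0..T}. p t > 0"
  and cu: "continuous_on {0..T} u" and cp: "continuous_on {0..T} p"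
  and der: "\<forall>t\<in>{0<..<T}. (u has_real_derivative ud t) (at t) \<and> (ud has_real_derivative udd t) (at t) \<and>
      (p has_real_derivative pd t) (at t) \<and> (pd has_real_derivative pdd t) (at t) \<and>
      -udd t + c t * u t \<ge> 0 \<and> -pdd t + c t * p t > 0"
  and u0: "u 0 \<ge> 0" and uT: "u T \<ge> 0"
  shows "\<forall>t\<in>{0..T}. u t \<ge> 0"
proof -
  have cr: "continuous_on {0..T} (\<lambda>t. u t / p t)"
    using cu cp ppos by (intro continuous_intros) auto
  obtain t0 where t0: "t0 \<in> {0..T}" and mn: "\<forall>y\<in>{0..T}. u t0 / p t0 \<le> u y / p y"
    using continuous_attains_inf[OF compact_Icc _ cr] T by auto
  show ?thesis
  proof (rule ccontr)
    assume "\<not> ?thesis"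
    then obtain t1 where t1: "t1 \<in> {0..T}" "u t1 < 0" by auto
    define k where "k = u t0 / p t0"
    have "u t1 / p t1 < 0" using t1 ppos by (simp add: divide_neg_pos)
    then have kneg: "k < 0" using mn t1 unfolding k_def by fastforce
    have "t0 \<noteq> 0"
    proof
      assume "t0 = 0" moreover have "p 0 > 0" using ppos T by auto
      ultimately have "k \<ge> 0" using u0 unfolding k_def by simp
      then show False using kneg by simp
    qed
    moreover have "t0 \<noteq> T"
    proof
      assume "t0 = T" moreover have "p T > 0" using ppos T by auto
      ultimately have "k \<ge> 0" using uT unfolding k_def by simp
      then show False using kneg by simp
    qed
    ultimately have t0i: "0 < t0" "t0 < T" using t0 by auto
    define v where "v = (\<lambda>t. u t - k * p t)"
    define v1 where "v1 = (\<lambda>t. ud t - k * pd t)"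
    have vge: "\<forall>y\<in>{0..T}. v y \<ge> 0"
    proof
      fix y assume y: "y \<in> {0..T}"
      have "k \<le> u y / p y" using mn y unfolding k_def by auto
      then have "k * p y \<le> u y" using ppos y by (simp add: pos_le_divide_eq)
      then show "v y \<ge> 0" unfolding v_def by simp
    qed
    have "p t0 > 0" using ppos t0 by auto
    then have v0: "v t0 = 0" unfolding v_def k_def by simp
    have dv: "\<And>t. t \<in> {0<..<T} \<Longrightarrow> (v has_real_derivative v1 t) (at t)"
      unfolding v_def v_def v1_def using der by (auto intro!: derivative_eq_intros)
    have dv1: "(v1 has_real_derivative (udd t0 - k * pdd t0)) (at t0)"
      unfolding v1_def using der t0i by (auto intro!: derivative_eq_intros)
    have v1z: "v1 t0 = 0"
    proof (rule DERIV_local_min[OF dv[of t0]])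
      show "t0 \<in> {0<..<T}" using t0i by auto
      show "0 < min t0 (T - t0)" using t0i by auto
      show "\<forall>y. \<bar>t0 - y\<bar> < min t0 (T - t0) \<longrightarrow> v t0 \<le> v y"
        using vge v0 by (auto simp: abs_if split: if_splits)
    qed
    have neg: "udd t0 - k * pdd t0 < 0"
    proof -
      have A: "-udd t0 + c t0 * u t0 \<ge> 0" and B: "-pdd t0 + c t0 * p t0 > 0" using der t0i by auto
      have "(-k) * (-pdd t0 + c t0 * p t0) > 0" using B kneg by (intro mult_pos_pos) auto
      then have X: "k * pdd t0 - k * (c t0 * p t0) > 0" by (simp add: algebra_simps)
      have "u t0 = k * p t0" using v0 unfolding v_def by simp
      then have Y: "c t0 * u t0 = k * (c t0 * p t0)" by simp
      show ?thesis using A X Y by linarith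
    qed
    obtain d where d: "d > 0" "\<forall>h>0. h < d \<longrightarrow> v1 t0 > v1 (t0 + h)"
      using DERIV_neg_dec_right[OF dv1 neg] by blast
    define s where "s = t0 + min d (T - t0) / 2"
    have s: "t0 < s" "s < T" "s - t0 < d" using d(1) t0i unfolding s_def by (auto simp: min_def field_simps)
    obtain z where z: "t0 < z" "z < s" "v s - v t0 = (s - t0) * v1 z"
      using MVT2[of t0 s v v1] s dv t0i by force
    have "v1 z < 0" using d(2)[rule_format, of "z - t0"] z s v1z by auto
    then have "v s < 0" using z v0 s by (simp add: mult_pos_neg)
    moreover have "s \<in> {0..T}" using s t0i by auto
    ultimately show False using vge by fastforce
  qed
qed




lemma Q_facts:
  assumes PQ: "pendulum_QT T Q Q'" and T: "T > 0"
  shows "\<forall>t. Q' t > 0" "\<forall>t. (Q' t)\<^sup>2 \<ge> 2 - 2 * cos (Q t)"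
    "\<forall>t\<in>{0..T}. -pi \<le> Q t \<and> Q t \<le> pi"
    "\<forall>t. (Q has_real_derivative Q' t) (at t)" "\<forall>t. (Q' has_real_derivative sin (Q t)) (at t)"
    "continuous_on UNIV Q" "continuous_on UNIV Q'"
proof -
  have dQ: "\<And>t. (Q has_real_derivative Q' t) (at t)" and dQ': "\<And>t. (Q' has_real_derivative sin (Q t)) (at t)"
    using PQ unfolding pendulum_QT_def by auto
  have E0: "(Q' 0)\<^sup>2 / 2 + cos (Q 0) - 1 > 0" and Q0: "Q 0 = - pi" and QT: "Q T = pi"
    using PQ unfolding pendulum_QT_def by auto
  define e where "e = (\<lambda>t. (Q' t)\<^sup>2 / 2 + cos (Q t) - 1)"
  have de: "\<forall>t. (e has_real_derivative 0) (at t)"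
  proof
    fix t
    show "(e has_real_derivative 0) (at t)"
      unfolding e_def by (rule derivative_eq_intros dQ dQ' refl | simp)+
  qed
  have econst: "\<And>t. e t = e 0" using DERIV_isconst_all[OF de] by blast
  have sq: "\<And>t. (Q' t)\<^sup>2 = 2 * e 0 + 2 - 2 * cos (Q t)"
    using econst unfolding e_def by (simp add: field_simps)
  have e0: "e 0 > 0" using E0 unfolding e_def by simp
  show sq2: "\<forall>t. (Q' t)\<^sup>2 \<ge> 2 - 2 * cos (Q t)" using sq e0 by (simp add: less_imp_le)
  have nz: "\<And>t. Q' t \<noteq> 0"
  proof
    fix t assume "Q' t = 0"
    then have "2 * e 0 + 2 - 2 * cos (Q t) = 0" using sq[of t] by simp
    moreover have "cos (Q t) \<le> 1" by simp
    ultimately show False using e0 by linarith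
  qed
  show cQ: "continuous_on UNIV Q" by (rule continuous_at_imp_continuous_on) (use DERIV_isCont dQ in blast)
  show cQ': "continuous_on UNIV Q'" by (rule continuous_at_imp_continuous_on) (use DERIV_isCont dQ' in blast)
  obtain z where z: "0 < z" "z < T" "Q T - Q 0 = (T - 0) * Q' z"
    using MVT2[of 0 T Q Q'] T dQ by blast
  have "2 * pi = T * Q' z" using z Q0 QT by simp
  then have "T * Q' z > 0" using pi_gt_zero by linarith
  then have Qz: "Q' z > 0" using T by (simp add: zero_less_mult_iff)
  show pos: "\<forall>t. Q' t > 0"
  proof
    fix t show "Q' t > 0"
    proof (rule ccontr)
      assume "\<not> Q' t > 0"
      then have neg: "Q' t \<le> 0" by simp
      have "\<exists>x. Q' x = 0"
      proof (cases "t \<le> z")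
        case True
        then show ?thesis using IVT'[of Q' t 0 z] neg Qz continuous_on_subset[OF cQ'] by force
      next
        case False
        then show ?thesis using IVT2'[of Q' t 0 z] neg Qz continuous_on_subset[OF cQ'] by force
      qed
      then show False using nz by blast
    qed
  qed
  show "\<forall>t\<in>{0..T}. -pi \<le> Q t \<and> Q t \<le> pi"
  proof
    fix t assume t: "t \<in> {0..T}"
    have "Q 0 \<le> Q t"
      by (rule DERIV_nonneg_imp_increasing_open[of 0 t Q]) (use t dQ pos continuous_on_subset[OF cQ] in \<open>auto intro: less_imp_le\<close>)
    moreover have "Q t \<le> Q T"
      by (rule DERIV_nonneg_imp_increasing_open[of t T Q]) (use t dQ pos continuous_on_subset[OF cQ] in \<open>auto intro: less_imp_le\<close>)
    ultimately show "-pi \<le> Q t \<and> Q t \<le> pi" using Q0 QT by simp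
  qed
  show "\<forall>t. (Q has_real_derivative Q' t) (at t)" "\<forall>t. (Q' has_real_derivative sin (Q t)) (at t)"
    using dQ dQ' by auto
qed




lemma lip:
  fixes g g1 :: "real \<Rightarrow> real"
  assumes d: "\<forall>s\<in>{a..b}. (g has_real_derivative g1 s) (at s)"
    and bd: "\<forall>s\<in>{a..b}. \<bar>g1 s\<bar> \<le> B"
    and x: "x \<in> {a..b}" and y: "y \<in> {a..b}"
  shows "\<bar>g y - g x\<bar> \<le> B * \<bar>y - x\<bar>"
proof -
  have main: "\<bar>g q - g p\<bar> \<le> B * \<bar>q - p\<bar>" if pq: "p < q" "p \<in> {a..b}" "q \<in> {a..b}" for p q
  proof -
    obtain z where z: "p < z" "z < q" "g q - g p = (q - p) * g1 z"
      using MVT2[of p q g g1] pq d by force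
    have "z \<in> {a..b}" using z pq by auto
    then have "\<bar>g1 z\<bar> \<le> B" using bd by auto
    then have "\<bar>q - p\<bar> * \<bar>g1 z\<bar> \<le> \<bar>q - p\<bar> * B" by (intro mult_left_mono) auto
    then show ?thesis using z by (simp add: abs_mult mult.commute)
  qed
  show ?thesis
  proof (cases x y rule: linorder_cases)
    case less then show ?thesis using main x y by blast
  next
    case equal then show ?thesis by simp
  next
    case greater then show ?thesis using main[of y x] x y by (simp add: abs_minus_commute)
  qed
qed

lemma Vineq:
  fixes a b c f F :: real
  assumes "\<bar>c\<bar> \<le> 1" "\<bar>f\<bar> \<le> F"
  shows "\<bar>2*a*b + 2*b*(c*a - f)\<bar> \<le> 3*(a\<^sup>2 + b\<^sup>2 + F\<^sup>2)"
proof -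
  have e: "2*a*b + 2*b*(c*a - f) = 2*a*b*(1+c) - 2*b*f" by (simp add: algebra_simps)
  have "\<bar>1 + c\<bar> \<le> 2" using assms by (simp add: abs_le_iff)
  then have "\<bar>2*a*b*(1+c)\<bar> \<le> \<bar>2*a*b\<bar> * 2" unfolding abs_mult[of "2*a*b"] by (intro mult_left_mono) auto
  moreover have "\<bar>2*a*b\<bar> * 2 \<le> 2*(a\<^sup>2 + b\<^sup>2)"
  proof -
    have "0 \<le> (\<bar>a\<bar> - \<bar>b\<bar>)\<^sup>2" by simp
    then show ?thesis by (simp add: abs_mult power2_eq_square algebra_simps)
  qed
  moreover have "\<bar>2*b*f\<bar> \<le> b\<^sup>2 + F\<^sup>2"
  proof -
    have "\<bar>f\<bar> \<le> F" by fact
    then have "\<bar>b\<bar> * \<bar>f\<bar> \<le> \<bar>b\<bar> * F" by (intro mult_left_mono) auto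
    moreover have "0 \<le> (\<bar>b\<bar> - F)\<^sup>2" by simp
    ultimately show ?thesis by (simp add: abs_mult power2_eq_square algebra_simps)
  qed
  moreover have "0 \<le> a\<^sup>2" "0 \<le> F\<^sup>2" by auto
  ultimately show ?thesis unfolding e by (smt (verit))
qed




lemma bound:
  fixes T :: real
  assumes T1: "T \<ge> 1" and PQ: "pendulum_QT T Q Q'" and cf: "continuous_on {-1..T+1} f"
    and gs: "green_sol T Q f h h'"
  shows "\<forall>t\<in>{-1..T+1}. \<bar>h t\<bar> + \<bar>h' t\<bar> \<le> 1000 * exp 3 * (SUP s\<in>{-1..T+1}. \<bar>f s\<bar>)"
proof -
  define I where "I = {-1..T+1::real}"
  obtain h'' where hd: "\<forall>t\<in>I. (h has_real_derivative h' t) (at t within I) \<and>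
        (h' has_real_derivative h'' t) (at t within I) \<and> - h'' t + cos (Q t) * h t = f t"
    and h0: "h 0 = 0" and hT: "h T = 0"
    using gs unfolding green_sol_def I_def by blast
  have T0: "T > 0" using T1 by simp
  note QF = Q_facts[OF PQ T0]
  define F where "F = (SUP s\<in>I. \<bar>f s\<bar>)"
  have cfa: "continuous_on I (\<lambda>s. \<bar>f s\<bar>)" using cf unfolding I_def by (intro continuous_intros)
  obtain m where "m \<in> I" and mx: "\<forall>y\<in>I. \<bar>f y\<bar> \<le> \<bar>f m\<bar>"
    using continuous_attains_sup[OF _ _ cfa] T0 unfolding I_def by auto
  have bdd: "bdd_above ((\<lambda>s. \<bar>f s\<bar>) ` I)" using mx by (intro bdd_aboveI2) auto
  have fle: "\<And>s. s \<in> I \<Longrightarrow> \<bar>f s\<bar> \<le> F" unfolding F_def by (rule cSUP_upper[OF _ bdd])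
  have F0: "F \<ge> 0" using fle[of 0] T0 unfolding I_def by force
  have hdA: "(h has_real_derivative h' t) (at t) \<and> (h' has_real_derivative h'' t) (at t)"
    if "t \<in> {-1<..<T+1}" for t
  proof -
    have "t \<in> I" using that unfolding I_def by auto
    then have "(h has_real_derivative h' t) (at t within I) \<and> (h' has_real_derivative h'' t) (at t within I)"
      using hd by blast
    moreover have "at t within I = at t" using that at_within_Icc_at[of "-1" t "T+1"] unfolding I_def by auto
    ultimately show ?thesis by simp
  qed
  have eq: "\<And>t. t \<in> I \<Longrightarrow> h'' t = cos (Q t) * h t - f t" using hd by force
  have ch: "continuous_on I h" using hd by (intro DERIV_continuous_on) blast
  have ch': "continuous_on I h'" using hd by (intro DERIV_continuous_on) blast
  have I0T: "{0..T} \<subseteq> I" "{-1..0} \<subseteq> I" "{T..T+1} \<subseteq> I" unfolding I_def using T0 by auto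
  define p where "p = (\<lambda>t. 10 - (Q t)\<^sup>2)"
  define p1 where "p1 = (\<lambda>t. - 2 * Q t * Q' t)"
  define p2 where "p2 = (\<lambda>t. - 2 * ((Q' t)\<^sup>2 + Q t * sin (Q t)))"
  have dp: "(p has_real_derivative p1 t) (at t)" for t
    unfolding p_def p1_def using QF(4)
    by (auto intro!: derivative_eq_intros)
  have dp1: "(p1 has_real_derivative p2 t) (at t)" for t
    unfolding p1_def p2_def using QF(4,5)
    by (auto intro!: derivative_eq_intros simp: power2_eq_square algebra_simps)
  have pibd: "pi\<^sup>2 < 10"
  proof -
    have "pi * pi \<le> 3.15 * 3.15" by (rule mult_mono) (use pi_approx in auto)
    then show ?thesis by (simp add: power2_eq_square)
  qed
  have Qsq: "(Q t)\<^sup>2 \<le> pi\<^sup>2" if "t \<in> {0..T}" for t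
  proof -
    have "-pi \<le> Q t \<and> Q t \<le> pi" using QF(3) that by blast
    then have "\<bar>Q t\<bar> \<le> pi" by (simp add: abs_le_iff)
    then show ?thesis by (rule sq_le_helper)
  qed
  have ppos: "\<forall>t\<in>{0..T}. p t > 0" using Qsq pibd unfolding p_def by force
  have ple: "p t \<le> 10" for t unfolding p_def by simp
  have Lp: "-p2 t + cos (Q t) * p t \<ge> 1/20" if "t \<in> {0..T}" for t
  proof -
    have "-p2 t + cos (Q t) * p t = 2 * (Q' t)\<^sup>2 + 2 * Q t * sin (Q t) + cos (Q t) * (10 - (Q t)\<^sup>2)"
      unfolding p_def p2_def by (simp add: algebra_simps)
    also have "\<dots> \<ge> 4 + cos (Q t) * (6 - (Q t)\<^sup>2) + 2 * Q t * sin (Q t)"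
      using QF(2) by (simp add: algebra_simps) (smt (verit))
    finally show ?thesis using trig_ineq[of "Q t"] QF(3) that by auto
  qed
  have cp: "continuous_on {0..T} p" using dp by (intro DERIV_continuous_on) (rule has_field_derivative_at_within)
  have dA0: "(h has_real_derivative h' t) (at t) \<and> (h' has_real_derivative h'' t) (at t)"
    if "t \<in> {0..T}" for t using hdA that T0 by auto
  have hbd: "\<bar>h t\<bar> \<le> 200 * F" if t: "t \<in> {0..T}" for t
  proof -
    have A: "\<forall>t\<in>{0..T}. (\<lambda>t. 20 * F * p t - h t) t \<ge> 0"
    proof (rule maxp[where ud = "\<lambda>t. 20 * F * p1 t - h' t" and udd = "\<lambda>t. 20 * F * p2 t - h'' t"
          and p = p and pd = p1 and pdd = p2 and c = "\<lambda>t. cos (Q t)"])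
      show "0 < T" by fact
      show "\<forall>t\<in>{0..T}. p t > 0" by fact
      show "continuous_on {0..T} (\<lambda>t. 20 * F * p t - h t)"
        using cp continuous_on_subset[OF ch I0T(1)] by (intro continuous_intros)
      show "continuous_on {0..T} p" by fact
      show "0 \<le> 20 * F * p 0 - h 0" using h0 ppos F0 T0 by (simp add: less_imp_le)
      show "0 \<le> 20 * F * p T - h T" using hT ppos F0 T0 by (simp add: less_imp_le)
      show "\<forall>t\<in>{0<..<T}. ((\<lambda>t. 20 * F * p t - h t) has_real_derivative 20 * F * p1 t - h' t) (at t) \<and>
        ((\<lambda>t. 20 * F * p1 t - h' t) has_real_derivative 20 * F * p2 t - h'' t) (at t) \<and>
        (p has_real_derivative p1 t) (at t) \<and> (p1 has_real_derivative p2 t) (at t) \<and>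
        0 \<le> - (20 * F * p2 t - h'' t) + cos (Q t) * (20 * F * p t - h t) \<and> 0 < - p2 t + cos (Q t) * p t"
      proof
        fix t assume t: "t \<in> {0<..<T}"
        then have tt: "t \<in> {0..T}" by auto
        have L: "- p2 t + cos (Q t) * p t \<ge> 1/20" using Lp tt by blast
        have "- (20 * F * p2 t - h'' t) + cos (Q t) * (20 * F * p t - h t)
            = 20 * F * (- p2 t + cos (Q t) * p t) - f t" using eq[of t] tt I0T by (auto simp: algebra_simps)
        moreover have "20 * F * (- p2 t + cos (Q t) * p t) \<ge> 20 * F * (1/20)" using L F0 by (intro mult_left_mono) auto
        moreover have "f t \<le> F" using fle[of t] tt I0T by auto
        ultimately show "((\<lambda>t. 20 * F * p t - h t) has_real_derivative 20 * F * p1 t - h' t) (at t) \<and>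
        ((\<lambda>t. 20 * F * p1 t - h' t) has_real_derivative 20 * F * p2 t - h'' t) (at t) \<and>
        (p has_real_derivative p1 t) (at t) \<and> (p1 has_real_derivative p2 t) (at t) \<and>
        0 \<le> - (20 * F * p2 t - h'' t) + cos (Q t) * (20 * F * p t - h t) \<and> 0 < - p2 t + cos (Q t) * p t"
          using dA0[OF tt] dp dp1 L by (auto intro!: derivative_eq_intros)
      qed
    qed
    have B: "\<forall>t\<in>{0..T}. (\<lambda>t. 20 * F * p t + h t) t \<ge> 0"
    proof (rule maxp[where ud = "\<lambda>t. 20 * F * p1 t + h' t" and udd = "\<lambda>t. 20 * F * p2 t + h'' t"
          and p = p and pd = p1 and pdd = p2 and c = "\<lambda>t. cos (Q t)"])
      show "0 < T" by fact
      show "\<forall>t\<in>{0..T}. p t > 0" by fact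
      show "continuous_on {0..T} (\<lambda>t. 20 * F * p t + h t)"
        using cp continuous_on_subset[OF ch I0T(1)] by (intro continuous_intros)
      show "continuous_on {0..T} p" by fact
      show "0 \<le> 20 * F * p 0 + h 0" using h0 ppos F0 T0 by (simp add: less_imp_le)
      show "0 \<le> 20 * F * p T + h T" using hT ppos F0 T0 by (simp add: less_imp_le)
      show "\<forall>t\<in>{0<..<T}. ((\<lambda>t. 20 * F * p t + h t) has_real_derivative 20 * F * p1 t + h' t) (at t) \<and>
        ((\<lambda>t. 20 * F * p1 t + h' t) has_real_derivative 20 * F * p2 t + h'' t) (at t) \<and>
        (p has_real_derivative p1 t) (at t) \<and> (p1 has_real_derivative p2 t) (at t) \<and>
        0 \<le> - (20 * F * p2 t + h'' t) + cos (Q t) * (20 * F * p t + h t) \<and> 0 < - p2 t + cos (Q t) * p t"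
      proof
        fix t assume t: "t \<in> {0<..<T}"
        then have tt: "t \<in> {0..T}" by auto
        have L: "- p2 t + cos (Q t) * p t \<ge> 1/20" using Lp tt by blast
        have "- (20 * F * p2 t + h'' t) + cos (Q t) * (20 * F * p t + h t)
            = 20 * F * (- p2 t + cos (Q t) * p t) + f t" using eq[of t] tt I0T by (auto simp: algebra_simps)
        moreover have "20 * F * (- p2 t + cos (Q t) * p t) \<ge> 20 * F * (1/20)" using L F0 by (intro mult_left_mono) auto
        moreover have "- f t \<le> F" using fle[of t] tt I0T by auto
        ultimately show "((\<lambda>t. 20 * F * p t + h t) has_real_derivative 20 * F * p1 t + h' t) (at t) \<and>
        ((\<lambda>t. 20 * F * p1 t + h' t) has_real_derivative 20 * F * p2 t + h'' t) (at t) \<and>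
        (p has_real_derivative p1 t) (at t) \<and> (p1 has_real_derivative p2 t) (at t) \<and>
        0 \<le> - (20 * F * p2 t + h'' t) + cos (Q t) * (20 * F * p t + h t) \<and> 0 < - p2 t + cos (Q t) * p t"
          using dA0[OF tt] dp dp1 L by (auto intro!: derivative_eq_intros)
      qed
    qed
    have "20 * F * p t \<le> 20 * F * 10" using F0 ple by (intro mult_left_mono) auto
    moreover have "h t \<le> 20 * F * p t" "0 \<le> 20 * F * p t + h t" using A B t by auto
    ultimately show ?thesis by (simp add: abs_le_iff)
  qed
  have h2bd: "\<bar>h'' t\<bar> \<le> 201 * F" if t: "t \<in> {0..T}" for t
  proof -
    have "\<bar>cos (Q t) * h t\<bar> \<le> 1 * (200 * F)" unfolding abs_mult
      by (rule mult_mono) (use hbd[OF t] abs_cos_le_one in auto)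
    moreover have "\<bar>f t\<bar> \<le> F" using fle t I0T by auto
    ultimately show ?thesis using eq[of t] t I0T by auto
  qed
  have h1bd: "\<bar>h' t\<bar> \<le> 601 * F" if t: "t \<in> {0..T}" for t
  proof -
    define a where "a = min t (T - 1)"
    have a: "0 \<le> a" "a + 1 \<le> T" "a \<le> t" "t \<le> a + 1" using t T1 unfolding a_def by auto
    obtain z where z: "a < z" "z < a + 1" "h (a + 1) - h a = (a + 1 - a) * h' z"
      using MVT2[of a "a+1" h h'] a dA0 by force
    have zz: "z \<in> {0..T}" using z a by auto
    have "\<bar>h' z\<bar> \<le> 400 * F" using z hbd[of a] hbd[of "a+1"] a by auto
    moreover have "\<bar>h' t - h' z\<bar> \<le> 201 * F * \<bar>t - z\<bar>"
      by (rule lip[of 0 T h' h'']) (use dA0 h2bd t zz in auto)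
    moreover have "201 * F * \<bar>t - z\<bar> \<le> 201 * F * 1" using F0 z a by (intro mult_left_mono) auto
    ultimately show ?thesis by linarith
  qed
  define V where "V = (\<lambda>s. (h s)\<^sup>2 + (h' s)\<^sup>2 + F\<^sup>2)"
  define D where "D = (\<lambda>s. 2 * h s * h' s + 2 * h' s * h'' s)"
  have Vd: "(V has_real_derivative D s) (at s)" if "s \<in> {-1<..<T+1}" for s
    unfolding V_def D_def using hdA[OF that] by (auto intro!: derivative_eq_intros)
  have Db: "\<bar>D s\<bar> \<le> 3 * V s" if "s \<in> I" for s
    unfolding D_def V_def eq[OF that] by (rule Vineq) (use fle that abs_cos_le_one in auto)
  have cV: "continuous_on I V" unfolding V_def using ch ch' by (intro continuous_intros)
  define K where "K = 401202 * F\<^sup>2"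
  have V0T: "V s \<le> K" if s: "s \<in> {0..T}" for s
  proof -
    have "(h s)\<^sup>2 \<le> (200 * F)\<^sup>2" by (rule sq_le_helper) (use hbd s in auto)
    moreover have "(h' s)\<^sup>2 \<le> (601 * F)\<^sup>2" by (rule sq_le_helper) (use h1bd s in auto)
    ultimately show ?thesis unfolding V_def K_def by (simp add: power_mult_distrib)
  qed
  have K0: "K \<ge> 0" unfolding K_def by simp
  have Vleft: "V t \<le> exp 3 * K" if t: "t \<in> {-1..0}" for t
  proof -
    define g where "g = (\<lambda>s. V s * exp (3 * s))"
    have "g t \<le> g 0"
    proof (rule DERIV_nonneg_imp_increasing_open[of t 0 g])
      show "t \<le> 0" using t by auto
      show "continuous_on {t..0} g" unfolding g_def
        using continuous_on_subset[OF cV, of "{t..0}"] t T0 unfolding I_def by (intro continuous_intros) auto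
      fix x assume x: "t < x" "x < 0"
      then have xi: "x \<in> {-1<..<T+1}" "x \<in> I" using t T0 unfolding I_def by auto
      have "(g has_real_derivative (D x + 3 * V x) * exp (3 * x)) (at x)"
        unfolding g_def using Vd[OF xi(1)] by (auto intro!: derivative_eq_intros simp: algebra_simps)
      moreover have "(D x + 3 * V x) * exp (3 * x) \<ge> 0" using Db[OF xi(2)] by (intro mult_nonneg_nonneg) auto
      ultimately show "\<exists>y. (g has_real_derivative y) (at x) \<and> 0 \<le> y" by blast
    qed
    then have "V t * exp (3 * t) \<le> K" using V0T[of 0] T0 unfolding g_def by auto
    then have "V t * exp (3 * t) * exp (- 3 * t) \<le> K * exp (- 3 * t)" by (intro mult_right_mono) auto
    then have "V t \<le> K * exp (- 3 * t)" by (simp add: mult.assoc flip: exp_add)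
    also have "\<dots> \<le> K * exp 3" using t K0 by (intro mult_left_mono) auto
    finally show ?thesis by (simp add: mult.commute)
  qed
  have Vright: "V t \<le> exp 3 * K" if t: "t \<in> {T..T+1}" for t
  proof -
    define g where "g = (\<lambda>s. V s * exp (- 3 * s))"
    have "g t \<le> g T"
    proof (rule DERIV_nonpos_imp_decreasing_open[of T t g])
      show "T \<le> t" using t by auto
      show "continuous_on {T..t} g" unfolding g_def
        using continuous_on_subset[OF cV, of "{T..t}"] t T0 unfolding I_def by (intro continuous_intros) auto
      fix x assume x: "T < x" "x < t"
      then have xi: "x \<in> {-1<..<T+1}" "x \<in> I" using t T0 unfolding I_def by auto
      have "(g has_real_derivative (D x - 3 * V x) * exp (- 3 * x)) (at x)"
        unfolding g_def using Vd[OF xi(1)] by (auto intro!: derivative_eq_intros simp: algebra_simps)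
      moreover have "(D x - 3 * V x) * exp (- 3 * x) \<le> 0" using Db[OF xi(2)]
        by (intro mult_nonpos_nonneg) auto
      ultimately show "\<exists>y. (g has_real_derivative y) (at x) \<and> y \<le> 0" by blast
    qed
    moreover have "g T \<le> K * exp (- 3 * T)" using V0T[of T] T0 unfolding g_def by (intro mult_right_mono) auto
    ultimately have "g t \<le> K * exp (- 3 * T)" by linarith
    then have "V t * exp (- 3 * t) \<le> K * exp (- 3 * T)" unfolding g_def by simp
    then have "V t * exp (- 3 * t) * exp (3 * t) \<le> K * exp (- 3 * T) * exp (3 * t)" by (intro mult_right_mono) auto
    then have "V t \<le> K * exp (3 * (t - T))" by (simp add: mult.assoc algebra_simps flip: exp_add)
    also have "\<dots> \<le> K * exp 3" using t K0 by (intro mult_left_mono) auto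
    finally show ?thesis by (simp add: mult.commute)
  qed
  have Vall: "V t \<le> exp 3 * K" if t: "t \<in> I" for t
  proof -
    have "t \<in> {-1..0} \<or> t \<in> {0..T} \<or> t \<in> {T..T+1}" using t unfolding I_def by auto
    moreover have "K \<le> exp 3 * K" using K0 by (simp add: mult_le_cancel_right1)
    ultimately show ?thesis using Vleft V0T Vright by force
  qed
  show ?thesis unfolding I_def[symmetric] F_def[symmetric]
  proof
    fix t assume t: "t \<in> I"
    have e3: "exp (3::real) \<ge> 1" by simp
    have "(\<bar>h t\<bar> + \<bar>h' t\<bar>)\<^sup>2 \<le> 2 * V t"
    proof -
      have "0 \<le> (\<bar>h t\<bar> - \<bar>h' t\<bar>)\<^sup>2" by simp
      then have "(\<bar>h t\<bar> + \<bar>h' t\<bar>)\<^sup>2 \<le> 2 * ((h t)\<^sup>2 + (h' t)\<^sup>2)"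
        by (simp add: power2_eq_square algebra_simps)
      moreover have "0 \<le> F\<^sup>2" by simp
      ultimately show ?thesis unfolding V_def by (simp add: ring_distribs) (use zero_le_power2[of F] in linarith)
    qed
    also have "\<dots> \<le> 2 * (exp 3 * K)" using Vall[OF t] by simp
    also have "\<dots> \<le> (1000 * exp 3 * F)\<^sup>2"
    proof -
      have "exp 3 * F\<^sup>2 \<le> exp 3 * exp 3 * F\<^sup>2" using e3 by (intro mult_right_mono) auto
      moreover have "0 \<le> exp 3 * F\<^sup>2" by simp
      moreover have "(1000 * exp 3 * F)\<^sup>2 = 1000000 * (exp 3 * exp 3 * F\<^sup>2)"
        by (simp add: power2_eq_square)
      moreover have "2 * (exp 3 * K) = 802404 * (exp 3 * F\<^sup>2)" by (simp add: K_def)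
      ultimately show ?thesis by linarith
    qed
    finally show "\<bar>h t\<bar> + \<bar>h' t\<bar> \<le> 1000 * exp 3 * F"
      by (rule power2_le_imp_le) (use F0 in simp)
  qed
qed




lemma exist:
  fixes T :: real
  assumes T0: "T > 0" and PQ: "pendulum_QT T Q Q'" and cf: "continuous_on {-1..T+1} f"
  shows "\<exists>h h'. green_sol T Q f h h'"
proof -
  define I where "I = {-1..T+1::real}"
  note QF = Q_facts[OF PQ T0]
  have nz: "\<And>t. Q' t \<noteq> 0" using QF(1) by (metis less_irrefl)
  have dQI: "\<And>t. (Q has_real_derivative Q' t) (at t within I)"
    using QF(4) has_field_derivative_at_within by blast
  have dQ'I: "\<And>t. (Q' has_real_derivative sin (Q t)) (at t within I)"
    using QF(5) has_field_derivative_at_within by blast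
  have cQ': "continuous_on I Q'" using QF(7) continuous_on_subset by blast
  have cfI: "continuous_on I f" using cf unfolding I_def .
  define p where "p = (\<lambda>t. Q' t * f t)"
  have cp: "continuous_on I p" unfolding p_def using cQ' cfI by (intro continuous_intros)
  define Fp where "Fp = (\<lambda>t. integral {-1..t} p)"
  have dFp: "\<And>t. t \<in> I \<Longrightarrow> (Fp has_real_derivative p t) (at t within I)"
    unfolding Fp_def I_def by (rule integral_has_real_derivative) (use cp I_def in auto)
  have cFp: "continuous_on I Fp" by (rule DERIV_continuous_on[OF dFp])
  define k1 where "k1 = (\<lambda>t. 1 / (Q' t)\<^sup>2)"
  define k2 where "k2 = (\<lambda>t. Fp t / (Q' t)\<^sup>2)"
  have ck1: "continuous_on I k1" unfolding k1_def using cQ' nz by (intro continuous_intros) auto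
  have ck2: "continuous_on I k2" unfolding k2_def using cQ' cFp nz by (intro continuous_intros) auto
  define K where "K = (\<lambda>t. integral {-1..t} k1)"
  define P where "P = (\<lambda>t. integral {-1..t} k2)"
  have dK: "\<And>t. t \<in> I \<Longrightarrow> (K has_real_derivative k1 t) (at t within I)"
    unfolding K_def I_def by (rule integral_has_real_derivative) (use ck1 I_def in auto)
  have dP: "\<And>t. t \<in> I \<Longrightarrow> (P has_real_derivative k2 t) (at t within I)"
    unfolding P_def I_def by (rule integral_has_real_derivative) (use ck2 I_def in auto)
  have KT: "K T - K 0 > 0"
  proof -
    have "\<And>x. 0 \<le> x \<Longrightarrow> x \<le> T \<Longrightarrow> (K has_real_derivative k1 x) (at x)"
    proof -
      fix x assume x: "0 \<le> x" "x \<le> T"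
      have "at x within I = at x" unfolding I_def using x by (intro at_within_Icc_at) auto
      then show "(K has_real_derivative k1 x) (at x)" using dK[of x] x unfolding I_def by auto
    qed
    then obtain z where z: "0 < z" "z < T" "K T - K 0 = (T - 0) * k1 z"
      using MVT2[of 0 T K k1] T0 by blast
    have "k1 z > 0" unfolding k1_def using nz[of z] by simp
    then show ?thesis using z T0 by simp
  qed
  define c where "c = (P T - P 0) / (K T - K 0)"
  define g where "g = (\<lambda>t. c * (K t - K 0) - (P t - P 0))"
  define h where "h = (\<lambda>t. Q' t * g t)"
  define h1 where "h1 = (\<lambda>t. sin (Q t) * g t + (c - Fp t) / Q' t)"
  define h2 where "h2 = (\<lambda>t. cos (Q t) * h t - f t)"
  have dg: "(g has_real_derivative (c * k1 t - k2 t)) (at t within I)" if "t \<in> I" for t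
    unfolding g_def using dK[OF that] dP[OF that] by (auto intro!: derivative_eq_intros)
  have dh: "(h has_real_derivative h1 t) (at t within I)" if t: "t \<in> I" for t
  proof -
    have "(h has_real_derivative (sin (Q t) * g t + Q' t * (c * k1 t - k2 t))) (at t within I)"
      unfolding h_def using dg[OF t] dQ'I[of t] by (auto intro!: derivative_eq_intros)
    moreover have "sin (Q t) * g t + Q' t * (c * k1 t - k2 t) = h1 t"
      unfolding h1_def k1_def k2_def using nz[of t] by (simp add: field_simps power2_eq_square)
    ultimately show ?thesis by simp
  qed
  have dh1: "(h1 has_real_derivative h2 t) (at t within I)" if t: "t \<in> I" for t
  proof -
    have "(h1 has_real_derivative (cos (Q t) * Q' t * g t + sin (Q t) * (c * k1 t - k2 t)
        + ((- p t) * Q' t - (c - Fp t) * sin (Q t)) / (Q' t * Q' t))) (at t within I)"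
      unfolding h1_def using dg[OF t] dQ'I[of t] dQI[of t] dFp[OF t] nz[of t]
      by (auto intro!: derivative_eq_intros simp: power2_eq_square)
    moreover have "cos (Q t) * Q' t * g t + sin (Q t) * (c * k1 t - k2 t)
        + ((- p t) * Q' t - (c - Fp t) * sin (Q t)) / (Q' t * Q' t) = h2 t"
      unfolding h2_def h_def k1_def k2_def p_def using nz[of t] by (simp add: field_simps power2_eq_square)
    ultimately show ?thesis by simp
  qed
  have "green_sol T Q f h h1"
    unfolding green_sol_def
  proof (intro conjI exI[of _ h2] ballI)
    fix t assume t: "t \<in> {-1..T+1}"
    then have tI: "t \<in> I" unfolding I_def .
    show "(h has_real_derivative h1 t) (at t within {-1..T+1})" using dh[OF tI] unfolding I_def .
    show "(h1 has_real_derivative h2 t) (at t within {-1..T+1})" using dh1[OF tI] unfolding I_def .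
    show "- h2 t + cos (Q t) * h t = f t" unfolding h2_def by simp
  next
    show "h 0 = 0" unfolding h_def g_def by simp
    show "h T = 0" unfolding h_def g_def c_def using KT by simp
  qed
  then show ?thesis by blast
qed


lemma diff_green:
  assumes "green_sol T Q f h1 h1'" "green_sol T Q f h2 h2'"
  shows "green_sol T Q (\<lambda>t. 0) (\<lambda>t. h1 t - h2 t) (\<lambda>t. h1' t - h2' t)"
proof -
  obtain a where a: "\<forall>t\<in>{-1..T+1}. (h1 has_real_derivative h1' t) (at t within {-1..T+1}) \<and>
        (h1' has_real_derivative a t) (at t within {-1..T+1}) \<and> - a t + cos (Q t) * h1 t = f t"
    "h1 0 = 0" "h1 T = 0" using assms(1) unfolding green_sol_def by blast
  obtain b where b: "\<forall>t\<in>{-1..T+1}. (h2 has_real_derivative h2' t) (at t within {-1..T+1}) \<and>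
        (h2' has_real_derivative b t) (at t within {-1..T+1}) \<and> - b t + cos (Q t) * h2 t = f t"
    "h2 0 = 0" "h2 T = 0" using assms(2) unfolding green_sol_def by blast
  show ?thesis unfolding green_sol_def
  proof (intro conjI exI[of _ "\<lambda>t. a t - b t"] ballI)
    fix t assume t: "t \<in> {-1..T+1}"
    show "((\<lambda>t. h1 t - h2 t) has_real_derivative h1' t - h2' t) (at t within {-1..T+1})"
      using a(1) b(1) t by (auto intro!: derivative_eq_intros)
    show "((\<lambda>t. h1' t - h2' t) has_real_derivative a t - b t) (at t within {-1..T+1})"
      using a(1) b(1) t by (auto intro!: derivative_eq_intros)
    have "- a t + cos (Q t) * h1 t = f t" "- b t + cos (Q t) * h2 t = f t" using a(1) b(1) t by auto
    then show "- (a t - b t) + cos (Q t) * (h1 t - h2 t) = 0" by (simp add: algebra_simps)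
  qed (use a b in auto)
qed

theorem lemma8p1:
  shows "\<exists>T0 > 0. \<exists>C > 0. \<forall>T \<ge> T0. \<forall>Q Q'. pendulum_QT T Q Q' \<longrightarrow>
     (\<forall>f. continuous_on {-1..T+1} f \<longrightarrow>
        (\<exists>h h'. green_sol T Q f h h') \<and>
        (\<forall>h1 h1' h2 h2'. green_sol T Q f h1 h1' \<and> green_sol T Q f h2 h2' \<longrightarrow>
            (\<forall>t\<in>{-1..T+1}. h1 t = h2 t)) \<and>
        (\<forall>h h'. green_sol T Q f h h' \<longrightarrow>
            (\<forall>t\<in>{-1..T+1}. \<bar>h t\<bar> + \<bar>h' t\<bar> \<le> C * (SUP s\<in>{-1..T+1}. \<bar>f s\<bar>))))"
proof -
  have M: "\<forall>T \<ge> 1. \<forall>Q Q'. pendulum_QT T Q Q' \<longrightarrow>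
     (\<forall>f. continuous_on {-1..T+1} f \<longrightarrow>
        (\<exists>h h'. green_sol T Q f h h') \<and>
        (\<forall>h1 h1' h2 h2'. green_sol T Q f h1 h1' \<and> green_sol T Q f h2 h2' \<longrightarrow>
            (\<forall>t\<in>{-1..T+1}. h1 t = h2 t)) \<and>
        (\<forall>h h'. green_sol T Q f h h' \<longrightarrow>
            (\<forall>t\<in>{-1..T+1}. \<bar>h t\<bar> + \<bar>h' t\<bar> \<le> (1000 * exp 3) * (SUP s\<in>{-1..T+1}. \<bar>f s\<bar>))))"
  proof (intro allI impI)
  fix T :: real and Q Q' f :: "real \<Rightarrow> real"
  assume T: "1 \<le> T" and PQ: "pendulum_QT T Q Q'" and cf: "continuous_on {-1..T+1} f"
  have E: "\<exists>h h'. green_sol T Q f h h'" using exist[OF _ PQ cf] T by simp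
  have B: "\<forall>h h'. green_sol T Q f h h' \<longrightarrow>
            (\<forall>t\<in>{-1..T+1}. \<bar>h t\<bar> + \<bar>h' t\<bar> \<le> 1000 * exp 3 * (SUP s\<in>{-1..T+1}. \<bar>f s\<bar>))"
    using bound[OF T PQ cf] by blast
  have U: "\<forall>h1 h1' h2 h2'. green_sol T Q f h1 h1' \<and> green_sol T Q f h2 h2' \<longrightarrow>
            (\<forall>t\<in>{-1..T+1}. h1 t = h2 t)"
  proof (intro allI impI ballI)
    fix h1 h1' h2 h2' t assume g: "green_sol T Q f h1 h1' \<and> green_sol T Q f h2 h2'"
      and t: "t \<in> {-1..T+1::real}"
    have gd: "green_sol T Q (\<lambda>t. 0) (\<lambda>t. h1 t - h2 t) (\<lambda>t. h1' t - h2' t)"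
      using diff_green g by blast
    have "\<bar>h1 t - h2 t\<bar> + \<bar>h1' t - h2' t\<bar> \<le> 1000 * exp 3 * (SUP s\<in>{-1..T+1}. \<bar>(0::real)\<bar>)"
      using bound[OF T PQ _ gd] t by auto
    moreover have "(SUP s\<in>{-1..T+1::real}. \<bar>(0::real)\<bar>) = 0" using T by (simp add: cSUP_const)
    ultimately show "h1 t = h2 t" by simp
  qed
  show "(\<exists>h h'. green_sol T Q f h h') \<and>
        (\<forall>h1 h1' h2 h2'. green_sol T Q f h1 h1' \<and> green_sol T Q f h2 h2' \<longrightarrow>
            (\<forall>t\<in>{-1..T+1}. h1 t = h2 t)) \<and>
        (\<forall>h h'. green_sol T Q f h h' \<longrightarrow>
            (\<forall>t\<in>{-1..T+1}. \<bar>h t\<bar> + \<bar>h' t\<bar> \<le> (1000 * exp 3) * (SUP s\<in>{-1..T+1}. \<bar>f s\<bar>)))"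
    using E U B by blast
  qed
  have "(0::real) < 1" "(0::real) < 1000 * exp 3" by auto
  then show ?thesis using M by blast
qed

end
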